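(* With the notation of the context, the POVM $\{E_j\}_{j\in A}$ (on the support of $\Sigma=\sum_j\sigma_j$, completed arbitrarily on its orthogonal complement) maximizes the average success probability $\frac{1}{|A|}\sum_{j\in A}\mathrm{tr}(F_j\sigma_j)$ over all POVMs $\{F_j\}_{j\in A}$ for distinguishing the equiprobable states $\{\sigma_j\}_{j\in A}$.
   Context: $A$ finite abelian group, $p$ prime, $\varphi\in\mathrm{Aut}(A)$ with $\varphi^p=\mathrm{id}$, $|G|:=p|A|$, $k\ge1$. $\{\chi_x\}_{x\in A}$ are the characters of $A$ with $\chi_x\chi_{x'}=\chi_{x+x'}$, $\chi_x(y)=\chi_y(x)$. For $b\in\{0,\dots,p-1\}$, $\Phi_b:=\sum_{i=0}^{b-1}\varphi^i$ and $\hat\Phi_b:A\to A$ is a function with $\chi_x(\Phi_b(d))=\chi_{\hat\Phi_b(x)}(d)$ for all $x,d$. For $x\in A^k$, $b\in\mathbb{Z}_p^k$: $\hat\Phi_b(x):=\sum_j\hat\Phi_{b_j}(x_j)$, $S^x_w:=\{b:\hat\Phi_b(x)=w\}$, $\eta^x_w:=|S^x_w|$, $|S^x_w\rangle$ the normalized uniform superposition over $S^x_w$ (zero if empty). $\sigma_d:=\frac{1}{|G|^k}\sum_{x}\sum_{w,v}\chi_w(d)\overline{\chi_v(d)}\sqrt{\eta^x_w\eta^x_v}|x,S^x_w\rangle\langle x,S^x_v|$ and $E_j:=\frac{1}{|A|}\sum_x\sum_{w,v}\chi_w(j)\overline{\chi_v(j)}|x,S^x_w\rangle\langle x,S^x_v|$.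 *)

theory Defs
  imports "HOL-Analysis.Analysis"
begin

definition mmul :: "'i set \<Rightarrow> ('i \<Rightarrow> 'i \<Rightarrow> complex) \<Rightarrow> ('i \<Rightarrow> 'i \<Rightarrow> complex) \<Rightarrow> 'i \<Rightarrow> 'i \<Rightarrow> complex" where
  "mmul I M N = (\<lambda>i j. \<Sum>l\<in>I. M i l * N l j)"

definition mvec :: "'i set \<Rightarrow> ('i \<Rightarrow> 'i \<Rightarrow> complex) \<Rightarrow> ('i \<Rightarrow> complex) \<Rightarrow> 'i \<Rightarrow> complex" where
  "mvec I M v = (\<lambda>i. \<Sum>l\<in>I. M i l * v l)"

definition mtrace :: "'i set \<Rightarrow> ('i \<Rightarrow> 'i \<Rightarrow> complex) \<Rightarrow> complex" where
  "mtrace I M = (\<Sum>i\<in>I. M i i)"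

definition outer :: "('i \<Rightarrow> complex) \<Rightarrow> ('i \<Rightarrow> complex) \<Rightarrow> 'i \<Rightarrow> 'i \<Rightarrow> complex" where
  "outer u v = (\<lambda>i j. u i * cnj (v j))"

definition hermitian :: "'i set \<Rightarrow> ('i \<Rightarrow> 'i \<Rightarrow> complex) \<Rightarrow> bool" where
  "hermitian I M \<longleftrightarrow> (\<forall>i\<in>I. \<forall>j\<in>I. M j i = cnj (M i j))"

definition psd :: "'i set \<Rightarrow> ('i \<Rightarrow> 'i \<Rightarrow> complex) \<Rightarrow> bool" where
  "psd I M \<longleftrightarrow> (\<forall>v. (\<Sum>i\<in>I. \<Sum>j\<in>I. cnj (v i) * M i j * v j) \<in> \<real>
                  \<and> 0 \<le> Re (\<Sum>i\<in>I. \<Sum>j\<in>I. cnj (v i) * M i j * v j))"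

definition povm :: "'i set \<Rightarrow> 'j set \<Rightarrow> ('j \<Rightarrow> 'i \<Rightarrow> 'i \<Rightarrow> complex) \<Rightarrow> bool" where
  "povm I J F \<longleftrightarrow> (\<forall>j\<in>J. psd I (F j)) \<and>
     (\<forall>a\<in>I. \<forall>b\<in>I. (\<Sum>j\<in>J. F j a b) = (if a = b then 1 else 0))"

text \<open>Q is the orthogonal projector onto the kernel of S (= orthogonal complement of the
  support of the Hermitian operator S).\<close>
definition proj_onto_kernel :: "'i set \<Rightarrow> ('i \<Rightarrow> 'i \<Rightarrow> complex) \<Rightarrow> ('i \<Rightarrow> 'i \<Rightarrow> complex) \<Rightarrow> bool" where
  "proj_onto_kernel I S Q \<longleftrightarrow> hermitian I Q \<and>
     (\<forall>a\<in>I. \<forall>b\<in>I. mmul I Q Q a b = Q a b) \<and>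
     (\<forall>v. (\<forall>a\<in>I. mvec I S v a = 0) \<longleftrightarrow> (\<forall>a\<in>I. mvec I Q v a = v a))"

definition character :: "('a::ab_group_add \<Rightarrow> complex) \<Rightarrow> bool" where
  "character f \<longleftrightarrow> (\<forall>a b. f (a + b) = f a * f b) \<and> (\<forall>a. norm (f a) = 1)"

definition Phi :: "('a::ab_group_add \<Rightarrow> 'a) \<Rightarrow> nat \<Rightarrow> 'a \<Rightarrow> 'a" where
  "Phi phi b d = (\<Sum>i<b. (phi ^^ i) d)"

text \<open>Basis of the Hilbert space: pairs (x,b) with x \<in> A^k, b \<in> Z_p^k.\<close>
definition Xs :: "nat \<Rightarrow> (nat \<Rightarrow> 'a::finite) set" where
  "Xs k = PiE {..<k} (\<lambda>_. UNIV)"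

definition Bs :: "nat \<Rightarrow> nat \<Rightarrow> (nat \<Rightarrow> nat) set" where
  "Bs p k = PiE {..<k} (\<lambda>_. {..<p})"

definition Idx :: "nat \<Rightarrow> nat \<Rightarrow> ((nat \<Rightarrow> 'a::finite) \<times> (nat \<Rightarrow> nat)) set" where
  "Idx p k = Xs k \<times> Bs p k"

definition hatPhiv :: "(nat \<Rightarrow> 'a::ab_group_add \<Rightarrow> 'a) \<Rightarrow> nat \<Rightarrow> (nat \<Rightarrow> nat) \<Rightarrow> (nat \<Rightarrow> 'a) \<Rightarrow> 'a" where
  "hatPhiv Phihat k b x = (\<Sum>j<k. Phihat (b j) (x j))"

definition Sset :: "(nat \<Rightarrow> 'a::{finite,ab_group_add} \<Rightarrow> 'a) \<Rightarrow> nat \<Rightarrow> nat \<Rightarrow> (nat \<Rightarrow> 'a) \<Rightarrow> 'a \<Rightarrow> (nat \<Rightarrow> nat) set" where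
  "Sset Phihat p k x w = {b \<in> Bs p k. hatPhiv Phihat k b x = w}"

definition eta :: "(nat \<Rightarrow> 'a::{finite,ab_group_add} \<Rightarrow> 'a) \<Rightarrow> nat \<Rightarrow> nat \<Rightarrow> (nat \<Rightarrow> 'a) \<Rightarrow> 'a \<Rightarrow> nat" where
  "eta Phihat p k x w = card (Sset Phihat p k x w)"

text \<open>|x, S^x_w>: normalized uniform superposition (zero if S^x_w is empty).\<close>
definition ketS :: "(nat \<Rightarrow> 'a::{finite,ab_group_add} \<Rightarrow> 'a) \<Rightarrow> nat \<Rightarrow> nat \<Rightarrow> (nat \<Rightarrow> 'a) \<Rightarrow> 'a
     \<Rightarrow> ((nat \<Rightarrow> 'a) \<times> (nat \<Rightarrow> nat)) \<Rightarrow> complex" where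
  "ketS Phihat p k x w = (\<lambda>(y, c). if y = x \<and> c \<in> Sset Phihat p k x w
        then complex_of_real (1 / sqrt (real (eta Phihat p k x w))) else 0)"

definition sigma :: "('a::{finite,ab_group_add} \<Rightarrow> 'a \<Rightarrow> complex) \<Rightarrow> (nat \<Rightarrow> 'a \<Rightarrow> 'a) \<Rightarrow> nat \<Rightarrow> nat \<Rightarrow> 'a
     \<Rightarrow> ((nat \<Rightarrow> 'a) \<times> (nat \<Rightarrow> nat)) \<Rightarrow> ((nat \<Rightarrow> 'a) \<times> (nat \<Rightarrow> nat)) \<Rightarrow> complex" where
  "sigma chi Phihat p k d = (\<lambda>i j. (1 / (of_nat (p * CARD('a)) ^ k)) *
     (\<Sum>x\<in>Xs k. \<Sum>w\<in>UNIV. \<Sum>v\<in>UNIV. chi w d * cnj (chi v d) *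
        complex_of_real (sqrt (real (eta Phihat p k x w) * real (eta Phihat p k x v))) *
        outer (ketS Phihat p k x w) (ketS Phihat p k x v) i j))"

definition Eop :: "('a::{finite,ab_group_add} \<Rightarrow> 'a \<Rightarrow> complex) \<Rightarrow> (nat \<Rightarrow> 'a \<Rightarrow> 'a) \<Rightarrow> nat \<Rightarrow> nat \<Rightarrow> 'a
     \<Rightarrow> ((nat \<Rightarrow> 'a) \<times> (nat \<Rightarrow> nat)) \<Rightarrow> ((nat \<Rightarrow> 'a) \<times> (nat \<Rightarrow> nat)) \<Rightarrow> complex" where
  "Eop chi Phihat p k j = (\<lambda>a b. (1 / of_nat CARD('a)) *
     (\<Sum>x\<in>Xs k. \<Sum>w\<in>UNIV. \<Sum>v\<in>UNIV. chi w j * cnj (chi v j) *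
        outer (ketS Phihat p k x w) (ketS Phihat p k x v) a b))"

definition avg_success :: "('a::{finite,ab_group_add} \<Rightarrow> 'a \<Rightarrow> complex) \<Rightarrow> (nat \<Rightarrow> 'a \<Rightarrow> 'a) \<Rightarrow> nat \<Rightarrow> nat
     \<Rightarrow> ('a \<Rightarrow> ((nat \<Rightarrow> 'a) \<times> (nat \<Rightarrow> nat)) \<Rightarrow> ((nat \<Rightarrow> 'a) \<times> (nat \<Rightarrow> nat)) \<Rightarrow> complex) \<Rightarrow> real" where
  "avg_success chi Phihat p k F =
     Re ((1 / of_nat CARD('a)) * (\<Sum>j\<in>UNIV. mtrace (Idx p k) (mmul (Idx p k) (F j) (sigma chi Phihat p k j))))"

end

theory Submission
  imports Defs
begin


definition quadf :: "'i set \<Rightarrow> ('i \<Rightarrow> 'i \<Rightarrow> complex) \<Rightarrow> ('i \<Rightarrow> complex) \<Rightarrow> complex" where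
  "quadf I F v = (\<Sum>a\<in>I. \<Sum>b\<in>I. cnj (v a) * F a b * v b)"

lemma psd_quadf: "psd I F \<Longrightarrow> quadf I F v \<in> \<real> \<and> 0 \<le> Re (quadf I F v)"
  unfolding psd_def quadf_def by blast

lemma quadf_gram:
  assumes "finite I" "finite T"
  shows "(\<Sum>a\<in>I. \<Sum>b\<in>I. cnj (v a) * (\<Sum>t\<in>T. u t a * cnj (u t b)) * v b)
       = (\<Sum>t\<in>T. of_real ((cmod (\<Sum>a\<in>I. cnj (v a) * u t a))\<^sup>2))"
proof -
  have "(\<Sum>a\<in>I. \<Sum>b\<in>I. cnj (v a) * (\<Sum>t\<in>T. u t a * cnj (u t b)) * v b)
      = (\<Sum>t\<in>T. \<Sum>a\<in>I. \<Sum>b\<in>I. (cnj (v a) * u t a) * cnj (cnj (v b) * u t b))"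
  proof -
    have "(\<Sum>a\<in>I. \<Sum>b\<in>I. cnj (v a) * (\<Sum>t\<in>T. u t a * cnj (u t b)) * v b)
        = (\<Sum>a\<in>I. \<Sum>b\<in>I. \<Sum>t\<in>T. (cnj (v a) * u t a) * cnj (cnj (v b) * u t b))"
      by (simp add: sum_distrib_left sum_distrib_right mult_ac)
    also have "\<dots> = (\<Sum>a\<in>I. \<Sum>t\<in>T. \<Sum>b\<in>I. (cnj (v a) * u t a) * cnj (cnj (v b) * u t b))"
      by (rule sum.cong[OF refl], rule sum.swap)
    also have "\<dots> = (\<Sum>t\<in>T. \<Sum>a\<in>I. \<Sum>b\<in>I. (cnj (v a) * u t a) * cnj (cnj (v b) * u t b))"
      by (rule sum.swap)
    finally show ?thesis .
  qed
  also have "\<dots> = (\<Sum>t\<in>T. (\<Sum>a\<in>I. cnj (v a) * u t a) * cnj (\<Sum>b\<in>I. cnj (v b) * u t b))"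
    unfolding cnj_sum sum_product by simp
  also have "\<dots> = (\<Sum>t\<in>T. of_real ((cmod (\<Sum>a\<in>I. cnj (v a) * u t a))\<^sup>2))"
    by (simp only: complex_norm_square)
  finally show ?thesis .
qed

lemma psd_gram:
  assumes "finite I" "finite T" "r \<ge> 0"
    and "\<And>a b. a \<in> I \<Longrightarrow> b \<in> I \<Longrightarrow> M a b = of_real r * (\<Sum>t\<in>T. u t a * cnj (u t b))"
  shows "psd I M"
  unfolding psd_def
proof
  fix v
  have "(\<Sum>i\<in>I. \<Sum>j\<in>I. cnj (v i) * M i j * v j)
      = of_real r * (\<Sum>a\<in>I. \<Sum>b\<in>I. cnj (v a) * (\<Sum>t\<in>T. u t a * cnj (u t b)) * v b)"
    by (simp add: assms(4) sum_distrib_left mult_ac)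
  also have "\<dots> = of_real (r * (\<Sum>t\<in>T. (cmod (\<Sum>a\<in>I. cnj (v a) * u t a))\<^sup>2))"
    by (simp add: quadf_gram[OF assms(1,2)])
  finally have e: "(\<Sum>i\<in>I. \<Sum>j\<in>I. cnj (v i) * M i j * v j) = of_real (r * (\<Sum>t\<in>T. (cmod (\<Sum>a\<in>I. cnj (v a) * u t a))\<^sup>2))" .
  show "(\<Sum>i\<in>I. \<Sum>j\<in>I. cnj (v i) * M i j * v j) \<in> \<real> \<and> 0 \<le> Re (\<Sum>i\<in>I. \<Sum>j\<in>I. cnj (v i) * M i j * v j)"
    unfolding e using assms(3) by (simp add: sum_nonneg)
qed

lemma psd_add: "psd I A \<Longrightarrow> psd I B \<Longrightarrow> psd I (\<lambda>a b. A a b + B a b)"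
  unfolding psd_def
  by (simp add: distrib_left distrib_right sum.distrib)

lemma class_sum:
  assumes "finite I" "a \<in> I" "\<And>l. l \<in> I \<Longrightarrow> cl l = cl a \<Longrightarrow> f l = f a"
  shows "(\<Sum>l\<in>I. if cl l = cl a then f l else 0) = of_nat (card {l\<in>I. cl l = cl a}) * f a"
proof -
  have "(\<Sum>l\<in>I. if cl l = cl a then f l else 0) = (\<Sum>l\<in>{l\<in>I. cl l = cl a}. f l)"
    using assms(1) by (simp add: sum.inter_filter)
  also have "\<dots> = (\<Sum>l\<in>{l\<in>I. cl l = cl a}. f a)"
    using assms(3) by (intro sum.cong) auto
  finally show ?thesis by simp
qed

lemma class_card_pos:
  assumes "finite I" "a \<in> I"
  shows "card {l\<in>I. cl l = cl a} > 0"
  using assms by (subst card_gt_0_iff) auto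

lemma Q_char:
  fixes I :: "'i set" and Q S :: "'i \<Rightarrow> 'i \<Rightarrow> complex" and cl :: "'i \<Rightarrow> 'c"
  assumes fin: "finite I" and herm: "hermitian I Q"
    and idem: "\<forall>a\<in>I. \<forall>b\<in>I. mmul I Q Q a b = Q a b"
    and ker: "\<forall>v. (\<forall>a\<in>I. mvec I S v a = 0) \<longleftrightarrow> (\<forall>a\<in>I. mvec I Q v a = v a)"
    and Sform: "\<And>a b. a \<in> I \<Longrightarrow> b \<in> I \<Longrightarrow> S a b = \<kappa> * (if cl a = cl b then 1 else 0)"
    and kap: "\<kappa> \<noteq> 0"
    and aI: "a \<in> I" and bI: "b \<in> I"
  shows "Q a b = (if a = b then 1 else 0) - (if cl a = cl b then 1 / of_nat (card {l\<in>I. cl l = cl b}) else 0)"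
proof -
  have mvS: "mvec I S v m = \<kappa> * (\<Sum>l\<in>I. if cl l = cl m then v l else 0)" if "m \<in> I" for v m
    unfolding mvec_def sum_distrib_left
    by (intro sum.cong refl) (auto simp: Sform that)
  have stepA: "(\<Sum>l\<in>I. if cl l = cl m then Q l a else 0) = 0" if mI: "m \<in> I" for m
  proof -
    have "\<forall>m\<in>I. mvec I Q (\<lambda>l. Q l a) m = Q m a"
      using idem aI unfolding mvec_def mmul_def by auto
    hence "\<forall>m\<in>I. mvec I S (\<lambda>l. Q l a) m = 0" using ker by blast
    hence "\<kappa> * (\<Sum>l\<in>I. if cl l = cl m then Q l a else 0) = 0" using mvS[OF mI] mI by metis
    thus ?thesis using kap by simp
  qed
  define hb where "hb = card {l\<in>I. cl l = cl b}"
  have hbpos: "hb > 0" unfolding hb_def using fin bI by (subst card_gt_0_iff) auto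
  define r where "r l = (if l = b then 1 else 0) - (if cl l = cl b then 1 / of_nat hb else (0::complex))" for l
  have rsum: "(\<Sum>l\<in>I. if cl l = cl m then r l else 0) = 0" if mI: "m \<in> I" for m
  proof (cases "cl m = cl b")
    case True
    have "(\<Sum>l\<in>I. if cl l = cl m then r l else 0)
        = (\<Sum>l\<in>I. if l = b then 1 else 0) - (\<Sum>l\<in>I. if cl l = cl b then 1 / of_nat hb else 0)"
      unfolding r_def True sum_subtractf[symmetric] by (intro sum.cong refl) auto
    also have "\<dots> = 1 - of_nat hb * (1 / of_nat hb)"
      using fin bI by (simp add: sum.If_cases hb_def Int_def)
    also have "\<dots> = 0" using hbpos by simp
    finally show ?thesis .
  next
    case False
    thus ?thesis unfolding r_def by (intro sum.neutral) auto
  qed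
  have "\<forall>m\<in>I. mvec I S r m = 0" using rsum mvS by simp
  hence rfix: "mvec I Q r a = r a" using ker aI by blast
  have "mvec I Q r a = (\<Sum>l\<in>I. (if l = b then Q a l else 0) - (if cl l = cl b then Q a l else 0) / of_nat hb)"
    unfolding mvec_def r_def by (intro sum.cong refl) (simp add: right_diff_distrib)
  also have "\<dots> = Q a b - (1 / of_nat hb) * (\<Sum>l\<in>I. if cl l = cl b then Q a l else 0)"
    using fin bI by (simp add: sum_subtractf sum_divide_distrib)
  finally have e1: "mvec I Q r a = Q a b - (1 / of_nat hb) * (\<Sum>l\<in>I. if cl l = cl b then Q a l else 0)" .
  have "(\<Sum>l\<in>I. if cl l = cl b then Q a l else 0) = cnj (\<Sum>l\<in>I. if cl l = cl b then Q l a else 0)"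
    unfolding cnj_sum
  proof (intro sum.cong refl)
    fix l assume lI: "l \<in> I"
    have hQ: "Q a l = cnj (Q l a)" using herm aI lI unfolding hermitian_def by blast
    show "(if cl l = cl b then Q a l else 0) = cnj (if cl l = cl b then Q l a else 0)"
    proof (cases "cl l = cl b")
      case True
      then show ?thesis by (simp add: hQ)
    next
      case False
      then show ?thesis by simp
    qed
  qed
  also have "\<dots> = 0" using stepA[OF bI] by simp
  finally have "Q a b = r a" using rfix e1 by simp
  thus ?thesis unfolding r_def hb_def by simp
qed



lemma main_ineq:
  fixes I :: "'i set" and F :: "'i \<Rightarrow> 'i \<Rightarrow> complex" and cl :: "'i \<Rightarrow> 'c"
    and bl :: "'i \<Rightarrow> 'x" and c :: "'i \<Rightarrow> complex" and x :: 'x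
  assumes fin: "finite I" and psdF: "psd I F"
    and clbl: "\<And>a b. a \<in> I \<Longrightarrow> b \<in> I \<Longrightarrow> cl a = cl b \<Longrightarrow> bl a = bl b"
    and clc: "\<And>a b. a \<in> I \<Longrightarrow> b \<in> I \<Longrightarrow> cl a = cl b \<Longrightarrow> c a = c b"
    and cunit: "\<And>a. a \<in> I \<Longrightarrow> cnj (c a) * c a = 1"
  shows "Re (quadf I F (\<lambda>a. if bl a = x then c a else 0))
       \<le> (\<Sum>a\<in>{a\<in>I. bl a = x}. 1 / sqrt (real (card {l\<in>I. cl l = cl a})))
         * Re (\<Sum>a\<in>I. \<Sum>b\<in>I. if bl a = x \<and> cl a = cl b
                 then F a b / of_real (sqrt (real (card {l\<in>I. cl l = cl a}))) else 0)"
proof -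
  define h where "h a = real (card {l\<in>I. cl l = cl a})" for a
  define A where "A a = sqrt (h a)" for a
  define B where "B = {a\<in>I. bl a = x}"
  define s where "s = (\<Sum>a\<in>B. 1 / A a)"
  define g where "g a = (if bl a = x then c a else 0)" for a
  define \<alpha> where "\<alpha> l i = (if cl i = cl l then 1 / A l else 0)" for l i
  define u where "u t i = c i * of_real ((\<alpha> (fst t) i - \<alpha> (snd t) i) / sqrt (2 * A (fst t) * A (snd t)))" for t i
  define T where "T = B \<times> B"
  have finB: "finite B" unfolding B_def using fin by simp
  have BI: "B \<subseteq> I" unfolding B_def by auto
  have hpos: "h a > 0" if "a \<in> I" for a
    unfolding h_def using class_card_pos[OF fin that] by simp
  have Apos: "A a > 0" if "a \<in> I" for a unfolding A_def using hpos[OF that] by simp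
  have Asq: "A a * A a = h a" if "a \<in> I" for a unfolding A_def using hpos[OF that] by simp
  have hcl: "h l = h a" if "cl l = cl a" for l a
    unfolding h_def using that by simp
  have Acl: "A l = A a" if "cl l = cl a" for l a
    unfolding A_def using hcl[OF that] by simp
  have Bsum: "(\<Sum>l\<in>B. if cl l = cl a then f l else 0) = (if bl a = x then h a * f a else 0)"
    if aI: "a \<in> I" and fc: "\<And>l. l \<in> I \<Longrightarrow> cl l = cl a \<Longrightarrow> f l = f a" for a and f :: "'i \<Rightarrow> real"
  proof -
    have "(\<Sum>l\<in>B. if cl l = cl a then f l else 0) = (\<Sum>l\<in>I. if bl l = x then (if cl l = cl a then f l else 0) else 0)"
      unfolding B_def using fin by (simp add: sum.inter_filter)
    also have "\<dots> = (\<Sum>l\<in>I. if cl l = cl a then (if bl l = x then f l else 0) else 0)"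
      by (intro sum.cong refl) auto
    also have "\<dots> = of_nat (card {l\<in>I. cl l = cl a}) * (if bl a = x then f a else 0)"
    proof (rule class_sum[OF fin aI])
      fix l assume lI: "l \<in> I" and ll: "cl l = cl a"
      show "(if bl l = x then f l else 0) = (if bl a = x then f a else 0)"
        using fc[OF lI ll] clbl[OF lI aI ll] by simp
    qed
    finally show ?thesis unfolding h_def by simp
  qed
  define R where "R a b = s * (if bl a = x \<and> cl a = cl b then 1 / A a else 0)
       - (if bl a = x then 1 else 0) * (if bl b = x then 1 else (0::real))" for a b
  have realId: "(\<Sum>l\<in>B. \<Sum>m\<in>B. (\<alpha> l a - \<alpha> m a) * (\<alpha> l b - \<alpha> m b) / (2 * A l * A m)) = R a b"
    if aI: "a \<in> I" and bI: "b \<in> I" for a b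
  proof -
    define P1 where "P1 = (\<Sum>l\<in>B. \<alpha> l a * \<alpha> l b / A l)"
    define Pa where "Pa = (\<Sum>l\<in>B. \<alpha> l a / A l)"
    define Pb where "Pb = (\<Sum>l\<in>B. \<alpha> l b / A l)"
    have tm: "(\<alpha> l a - \<alpha> m a) * (\<alpha> l b - \<alpha> m b) / (2 * A l * A m)
       = (\<alpha> l a * \<alpha> l b / A l) * (1 / A m) / 2 + (1 / A l) * (\<alpha> m a * \<alpha> m b / A m) / 2
         - (\<alpha> l a / A l) * (\<alpha> m b / A m) / 2 - (\<alpha> l b / A l) * (\<alpha> m a / A m) / 2" for l m
    proof -
      have "(\<alpha> l a - \<alpha> m a) * (\<alpha> l b - \<alpha> m b) / (2 * A l * A m)
        = (\<alpha> l a * \<alpha> l b) / (2 * A l * A m) + (\<alpha> m a * \<alpha> m b) / (2 * A l * A m)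
          - (\<alpha> l a * \<alpha> m b) / (2 * A l * A m) - (\<alpha> l b * \<alpha> m a) / (2 * A l * A m)"
        by (simp add: add_divide_distrib[symmetric] diff_divide_distrib[symmetric] algebra_simps)
      then show ?thesis by (simp add: mult_ac)
    qed
    have "(\<Sum>l\<in>B. \<Sum>m\<in>B. (\<alpha> l a - \<alpha> m a) * (\<alpha> l b - \<alpha> m b) / (2 * A l * A m))
        = P1 * s / 2 + s * P1 / 2 - Pa * Pb / 2 - Pb * Pa / 2"
      unfolding tm P1_def Pa_def Pb_def s_def
      by (simp only: sum.distrib sum_subtractf sum_product sum_divide_distrib)
    also have "\<dots> = s * P1 - Pa * Pb" by (simp add: field_simps)
    also have "P1 = (if bl a = x \<and> cl a = cl b then 1 / A a else 0)"
    proof -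
      have "P1 = (\<Sum>l\<in>B. if cl l = cl a then (if cl b = cl l then 1 / (A l * A l * A l) else 0) else 0)"
        unfolding P1_def \<alpha>_def by (intro sum.cong refl) auto
      also have "\<dots> = (if bl a = x then h a * (if cl b = cl a then 1 / (A a * A a * A a) else 0) else 0)"
        by (rule Bsum[OF aI]) (auto dest: Acl)
      also have "\<dots> = (if bl a = x \<and> cl a = cl b then 1 / A a else 0)"
        using Asq[OF aI] Apos[OF aI] by (auto simp: field_simps)
      finally show ?thesis .
    qed
    also have "Pa = (if bl a = x then 1 else 0)"
    proof -
      have "Pa = (\<Sum>l\<in>B. if cl l = cl a then 1 / (A l * A l) else 0)"
        unfolding Pa_def \<alpha>_def by (intro sum.cong refl) auto
      also have "\<dots> = (if bl a = x then h a * (1 / (A a * A a)) else 0)"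
        by (rule Bsum[OF aI]) (auto dest: Acl)
      also have "\<dots> = (if bl a = x then 1 else 0)"
        using Asq[OF aI] hpos[OF aI] by auto
      finally show ?thesis .
    qed
    also have "Pb = (if bl b = x then 1 else 0)"
    proof -
      have "Pb = (\<Sum>l\<in>B. if cl l = cl b then 1 / (A l * A l) else 0)"
        unfolding Pb_def \<alpha>_def by (intro sum.cong refl) auto
      also have "\<dots> = (if bl b = x then h b * (1 / (A b * A b)) else 0)"
        by (rule Bsum[OF bI]) (auto dest: Acl)
      also have "\<dots> = (if bl b = x then 1 else 0)"
        using Asq[OF bI] hpos[OF bI] by auto
      finally show ?thesis .
    qed
    finally show ?thesis unfolding R_def .
  qed
  have gram: "(\<Sum>t\<in>T. cnj (u t a) * u t b) = cnj (c a) * c b * of_real (R a b)"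
    if aI: "a \<in> I" and bI: "b \<in> I" for a b
  proof -
    have "(\<Sum>t\<in>T. cnj (u t a) * u t b)
        = (\<Sum>t\<in>T. cnj (c a) * c b * of_real ((\<alpha> (fst t) a - \<alpha> (snd t) a) * (\<alpha> (fst t) b - \<alpha> (snd t) b) / (2 * A (fst t) * A (snd t))))"
    proof (intro sum.cong refl)
      fix t assume tT: "t \<in> T"
      hence "fst t \<in> I" "snd t \<in> I" unfolding T_def using BI by auto
      hence pos: "0 \<le> 2 * A (fst t) * A (snd t)" using Apos by (simp add: less_imp_le)
      have sq: "sqrt (2 * A (fst t) * A (snd t)) * sqrt (2 * A (fst t) * A (snd t)) = 2 * A (fst t) * A (snd t)"
        using pos by simp
      show "cnj (u t a) * u t b = cnj (c a) * c b * of_real ((\<alpha> (fst t) a - \<alpha> (snd t) a) * (\<alpha> (fst t) b - \<alpha> (snd t) b) / (2 * A (fst t) * A (snd t)))"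
      proof -
        let ?q = "sqrt (2 * A (fst t) * A (snd t))"
        let ?da = "\<alpha> (fst t) a - \<alpha> (snd t) a" and ?db = "\<alpha> (fst t) b - \<alpha> (snd t) b"
        have "cnj (u t a) * u t b = cnj (c a) * c b * of_real ((?da / ?q) * (?db / ?q))"
          unfolding u_def complex_cnj_mult complex_cnj_complex_of_real of_real_mult by (simp only: mult_ac)
        also have "(?da / ?q) * (?db / ?q) = ?da * ?db / (2 * A (fst t) * A (snd t))"
          using sq by (simp only: times_divide_times_eq)
        finally show ?thesis .
      qed
    qed
    also have "\<dots> = cnj (c a) * c b * of_real (\<Sum>l\<in>B. \<Sum>m\<in>B. (\<alpha> l a - \<alpha> m a) * (\<alpha> l b - \<alpha> m b) / (2 * A l * A m))"
    proof -
      have cart: "(\<Sum>t\<in>T. G (fst t) (snd t)) = (\<Sum>l\<in>B. \<Sum>m\<in>B. G l m)" for G :: "'i \<Rightarrow> 'i \<Rightarrow> complex"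
        unfolding T_def by (simp add: sum.cartesian_product split_def)
      show ?thesis
        by (subst cart[where G="\<lambda>l m. cnj (c a) * c b * of_real ((\<alpha> l a - \<alpha> m a) * (\<alpha> l b - \<alpha> m b) / (2 * A l * A m))"])
           (simp only: sum_distrib_left of_real_sum)
    qed
    also have "\<dots> = cnj (c a) * c b * of_real (R a b)" using realId[OF aI bI] by simp
    finally show ?thesis .
  qed
  have finT: "finite T" unfolding T_def using finB by simp
  have "(\<Sum>t\<in>T. quadf I F (u t)) = (\<Sum>a\<in>I. \<Sum>b\<in>I. F a b * (\<Sum>t\<in>T. cnj (u t a) * u t b))"
  proof -
    have "(\<Sum>t\<in>T. quadf I F (u t)) = (\<Sum>t\<in>T. \<Sum>a\<in>I. \<Sum>b\<in>I. F a b * (cnj (u t a) * u t b))"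
      unfolding quadf_def by (simp add: mult_ac)
    also have "\<dots> = (\<Sum>a\<in>I. \<Sum>t\<in>T. \<Sum>b\<in>I. F a b * (cnj (u t a) * u t b))"
      by (rule sum.swap)
    also have "\<dots> = (\<Sum>a\<in>I. \<Sum>b\<in>I. \<Sum>t\<in>T. F a b * (cnj (u t a) * u t b))"
      by (rule sum.cong[OF refl], rule sum.swap)
    finally show ?thesis by (simp add: sum_distrib_left)
  qed
  also have "\<dots> = (\<Sum>a\<in>I. \<Sum>b\<in>I. F a b * (cnj (c a) * c b * of_real (R a b)))"
    by (intro sum.cong refl) (simp add: gram)
  also have "\<dots> = (\<Sum>a\<in>I. \<Sum>b\<in>I. of_real s * (if bl a = x \<and> cl a = cl b then F a b / of_real (A a) else 0)
                      - cnj (g a) * F a b * g b)"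
  proof (intro sum.cong refl)
    fix a b assume aI: "a \<in> I" and bI: "b \<in> I"
    show "F a b * (cnj (c a) * c b * of_real (R a b)) = of_real s * (if bl a = x \<and> cl a = cl b then F a b / of_real (A a) else 0)
                      - cnj (g a) * F a b * g b"
    proof (cases "bl a = x \<and> cl a = cl b")
      case True
      hence "c b = c a" "bl b = x" using clc[OF aI bI] clbl[OF aI bI] by auto
      thus ?thesis using True cunit[OF aI] unfolding R_def g_def
        by (simp add: field_simps)
    next
      case False
      thus ?thesis unfolding R_def g_def by (auto simp: field_simps)
    qed
  qed
  also have "\<dots> = of_real s * (\<Sum>a\<in>I. \<Sum>b\<in>I. if bl a = x \<and> cl a = cl b then F a b / of_real (A a) else 0)
        - quadf I F g"
    unfolding quadf_def by (simp add: sum_subtractf sum_distrib_left)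
  finally have eq: "(\<Sum>t\<in>T. quadf I F (u t)) = of_real s * (\<Sum>a\<in>I. \<Sum>b\<in>I. if bl a = x \<and> cl a = cl b then F a b / of_real (A a) else 0)
        - quadf I F g" .
  have "0 \<le> Re (\<Sum>t\<in>T. quadf I F (u t))"
    unfolding Re_sum using psd_quadf[OF psdF] by (simp add: sum_nonneg)
  hence "Re (quadf I F g) \<le> s * Re (\<Sum>a\<in>I. \<Sum>b\<in>I. if bl a = x \<and> cl a = cl b then F a b / of_real (A a) else 0)"
    unfolding eq by simp
  thus ?thesis unfolding g_def s_def B_def A_def h_def .
qed



lemma chi_norm:
  assumes "bij_betw chi UNIV {f. character f}"
  shows "cmod (chi w d) = 1"
proof -
  have "chi w \<in> {f. character f}" using assms bij_betwE by blast
  thus ?thesis unfolding character_def by auto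
qed

lemma chi_cnj_unit:
  assumes "bij_betw chi UNIV {f. character f}"
  shows "cnj (chi w d) * chi w d = 1"
proof -
  have "chi w d * cnj (chi w d) = of_real ((cmod (chi w d))\<^sup>2)" by (simp only: complex_norm_square)
  thus ?thesis using chi_norm[OF assms] by (simp add: mult.commute)
qed

lemma chi_orth:
  fixes chi :: "'a::{finite,ab_group_add} \<Rightarrow> 'a \<Rightarrow> complex"
  assumes chars: "bij_betw chi UNIV {f. character f}"
    and chi_mult: "\<And>x x' y. chi x y * chi x' y = chi (x + x') y"
    and chi_sym: "\<And>x y. chi x y = chi y x"
  shows "(\<Sum>d\<in>UNIV. chi w d * cnj (chi v d)) = (if w = v then of_nat CARD('a) else 0)"
proof -
  have chi0: "chi 0 d = 1" for d
  proof -
    have e: "chi 0 d = chi 0 d * chi 0 d" using chi_mult[where x=0 and x'=0 and y=d] by (simp only: add_0_left)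
    moreover have "chi 0 d \<noteq> 0" using chi_norm[OF chars, of 0 d] by auto
    ultimately show ?thesis using mult_cancel_left1 by metis
  qed
  have cnjeq: "cnj (chi v d) = chi (- v) d" for v d
  proof -
    have "chi v d * chi (- v) d = 1" using chi_mult[where x=v and x'="-v" and y=d] chi0 by simp
    hence "cnj (chi v d) * chi v d * chi (- v) d = cnj (chi v d)" by (simp add: mult.assoc)
    thus ?thesis using chi_cnj_unit[OF chars, of v d] by simp
  qed
  have prod: "chi w d * cnj (chi v d) = chi (w - v) d" for d
    using chi_mult[where x=w and x'="-v" and y=d] cnjeq by simp
  define u where "u = w - v"
  show ?thesis
  proof (cases "w = v")
    case True
    thus ?thesis using prod chi0 by simp
  next
    case False
    hence u0: "u \<noteq> 0" unfolding u_def by simp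
    have inj: "inj chi" using chars bij_betw_imp_inj_on by blast
    have "chi u \<noteq> chi 0" using inj u0 by (metis injD)
    then obtain y where y: "chi u y \<noteq> chi 0 y" by blast
    hence y1: "chi u y \<noteq> 1" using chi0 by simp
    have shift: "chi u (y + d) = chi u y * chi u d" for d
      using chi_sym chi_mult by metis
    have "(\<Sum>d\<in>UNIV. chi u d) = (\<Sum>d\<in>UNIV. chi u (y + d))"
      by (rule sum.reindex_bij_witness[where i="\<lambda>d. y + d" and j="\<lambda>d. d - y"]) (auto simp: algebra_simps)
    also have "\<dots> = chi u y * (\<Sum>d\<in>UNIV. chi u d)" by (simp add: shift sum_distrib_left)
    finally have "(1 - chi u y) * (\<Sum>d\<in>UNIV. chi u d) = 0" by (simp add: algebra_simps)
    hence "(\<Sum>d\<in>UNIV. chi u d) = 0" using y1 by simp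
    thus ?thesis using False prod unfolding u_def by simp
  qed
qed

definition Wf :: "(nat \<Rightarrow> 'a::ab_group_add \<Rightarrow> 'a) \<Rightarrow> nat \<Rightarrow> ((nat \<Rightarrow> 'a) \<times> (nat \<Rightarrow> nat)) \<Rightarrow> 'a" where
  "Wf Phihat k a = hatPhiv Phihat k (snd a) (fst a)"

definition clf :: "(nat \<Rightarrow> 'a::ab_group_add \<Rightarrow> 'a) \<Rightarrow> nat \<Rightarrow> ((nat \<Rightarrow> 'a) \<times> (nat \<Rightarrow> nat)) \<Rightarrow> (nat \<Rightarrow> 'a) \<times> 'a" where
  "clf Phihat k a = (fst a, Wf Phihat k a)"

definition hcard :: "(nat \<Rightarrow> 'a::{finite,ab_group_add} \<Rightarrow> 'a) \<Rightarrow> nat \<Rightarrow> nat \<Rightarrow> ((nat \<Rightarrow> 'a) \<times> (nat \<Rightarrow> nat)) \<Rightarrow> nat" where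
  "hcard Phihat p k a = card {l \<in> Idx p k. clf Phihat k l = clf Phihat k a}"

lemma fin_Idx: "finite (Idx p k :: ((nat \<Rightarrow> 'a::finite) \<times> (nat \<Rightarrow> nat)) set)"
  unfolding Idx_def Xs_def Bs_def by (simp add: finite_PiE)

lemma Idx_fst: "a \<in> Idx p k \<Longrightarrow> fst a \<in> Xs k"
  unfolding Idx_def by auto

lemma eta_eq:
  fixes Phihat :: "nat \<Rightarrow> 'a::{finite,ab_group_add} \<Rightarrow> 'a"
  assumes aI: "a \<in> Idx p k"
  shows "eta Phihat p k (fst a) (Wf Phihat k a) = hcard Phihat p k a"
proof -
  have "{l \<in> Idx p k. clf Phihat k l = clf Phihat k a} = Pair (fst a) ` Sset Phihat p k (fst a) (Wf Phihat k a)"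
    using aI unfolding Idx_def Sset_def clf_def Wf_def by force
  thus ?thesis unfolding eta_def hcard_def by (simp add: card_image inj_on_def)
qed

lemma hcard_pos:
  fixes Phihat :: "nat \<Rightarrow> 'a::{finite,ab_group_add} \<Rightarrow> 'a"
  assumes aI: "a \<in> Idx p k"
  shows "hcard Phihat p k a > 0"
  unfolding hcard_def by (rule class_card_pos[OF fin_Idx aI])

lemma hcard_cl:
  "clf Phihat k l = clf Phihat k a \<Longrightarrow> hcard Phihat p k l = hcard Phihat p k a"
  unfolding hcard_def by simp

lemma ketS_eval:
  fixes Phihat :: "nat \<Rightarrow> 'a::{finite,ab_group_add} \<Rightarrow> 'a"
  assumes aI: "a \<in> Idx p k"
  shows "ketS Phihat p k x w a = (if fst a = x \<and> Wf Phihat k a = w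
           then complex_of_real (1 / sqrt (real (hcard Phihat p k a))) else 0)"
proof -
  obtain y c where a: "a = (y, c)" by force
  have cB: "c \<in> Bs p k" using aI a unfolding Idx_def by auto
  show ?thesis
  proof (cases "y = x \<and> hatPhiv Phihat k c y = w")
    case True
    hence "eta Phihat p k x w = hcard Phihat p k a"
      using eta_eq[OF aI, where Phihat=Phihat] a unfolding Wf_def by (elim conjE) simp
    thus ?thesis using True cB a unfolding ketS_def Sset_def Wf_def by simp
  next
    case False
    thus ?thesis using a unfolding ketS_def Sset_def Wf_def by auto
  qed
qed

lemma phi_eval:
  fixes Phihat :: "nat \<Rightarrow> 'a::{finite,ab_group_add} \<Rightarrow> 'a" and chi :: "'a \<Rightarrow> 'a \<Rightarrow> complex"
  assumes aI: "a \<in> Idx p k"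
  shows "(\<Sum>w\<in>UNIV. chi w d * complex_of_real (sqrt (real (eta Phihat p k x w))) * ketS Phihat p k x w a)
       = (if fst a = x then chi (Wf Phihat k a) d else 0)"
proof -
  have "(\<Sum>w\<in>UNIV. chi w d * complex_of_real (sqrt (real (eta Phihat p k x w))) * ketS Phihat p k x w a)
     = (\<Sum>w\<in>UNIV. if w = Wf Phihat k a then (if fst a = x then chi w d * complex_of_real (sqrt (real (eta Phihat p k x w)))
            * complex_of_real (1 / sqrt (real (hcard Phihat p k a))) else 0) else 0)"
    by (intro sum.cong refl) (auto simp: ketS_eval[OF aI])
  also have "\<dots> = (if fst a = x then chi (Wf Phihat k a) d * complex_of_real (sqrt (real (eta Phihat p k x (Wf Phihat k a))))
            * complex_of_real (1 / sqrt (real (hcard Phihat p k a))) else 0)"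
    by simp
  also have "\<dots> = (if fst a = x then chi (Wf Phihat k a) d else 0)"
  proof -
    have "real (hcard Phihat p k a) > 0" using hcard_pos[OF aI] by simp
    hence "complex_of_real (sqrt (real (hcard Phihat p k a))) * complex_of_real (1 / sqrt (real (hcard Phihat p k a))) = 1"
      by (simp flip: of_real_mult)
    thus ?thesis using eta_eq[OF aI] by (auto simp: mult.assoc)
  qed
  finally show ?thesis .
qed

lemma psi_eval:
  fixes Phihat :: "nat \<Rightarrow> 'a::{finite,ab_group_add} \<Rightarrow> 'a" and chi :: "'a \<Rightarrow> 'a \<Rightarrow> complex"
  assumes aI: "a \<in> Idx p k"
  shows "(\<Sum>w\<in>UNIV. chi w j * ketS Phihat p k x w a)
       = (if fst a = x then chi (Wf Phihat k a) j * complex_of_real (1 / sqrt (real (hcard Phihat p k a))) else 0)"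
proof -
  have "(\<Sum>w\<in>UNIV. chi w j * ketS Phihat p k x w a)
     = (\<Sum>w\<in>UNIV. if w = Wf Phihat k a then (if fst a = x then chi w j
            * complex_of_real (1 / sqrt (real (hcard Phihat p k a))) else 0) else 0)"
    by (intro sum.cong refl) (auto simp: ketS_eval[OF aI])
  also have "\<dots> = (if fst a = x then chi (Wf Phihat k a) j * complex_of_real (1 / sqrt (real (hcard Phihat p k a))) else 0)"
    by simp
  finally show ?thesis .
qed

lemma sum_collapse:
  assumes "finite X" "y \<in> X"
  shows "(\<Sum>x\<in>X. (if y = x then A else 0) * cnj (if z = x then B else 0)) = (if y = z then A * cnj B else (0::complex))"
proof -
  have "(\<Sum>x\<in>X. (if y = x then A else 0) * cnj (if z = x then B else 0))
      = (\<Sum>x\<in>X. if x = y then (if y = z then A * cnj B else 0) else 0)"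
    by (intro sum.cong refl) auto
  also have "\<dots> = (if y = z then A * cnj B else 0)" using assms by simp
  finally show ?thesis .
qed

lemma fin_Xs: "finite (Xs k :: (nat \<Rightarrow> 'a::finite) set)"
  unfolding Xs_def by (simp add: finite_PiE)

lemma sigma_form:
  fixes Phihat :: "nat \<Rightarrow> 'a::{finite,ab_group_add} \<Rightarrow> 'a" and chi :: "'a \<Rightarrow> 'a \<Rightarrow> complex"
  shows "sigma chi Phihat p k d a b = (1 / of_nat (p * CARD('a)) ^ k) *
     (\<Sum>x\<in>Xs k. (\<Sum>w\<in>UNIV. chi w d * complex_of_real (sqrt (real (eta Phihat p k x w))) * ketS Phihat p k x w a)
        * cnj (\<Sum>w\<in>UNIV. chi w d * complex_of_real (sqrt (real (eta Phihat p k x w))) * ketS Phihat p k x w b))"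
  unfolding sigma_def outer_def cnj_sum sum_product
  by (simp add: real_sqrt_mult mult_ac)

lemma sigma_closed:
  fixes Phihat :: "nat \<Rightarrow> 'a::{finite,ab_group_add} \<Rightarrow> 'a" and chi :: "'a \<Rightarrow> 'a \<Rightarrow> complex"
  assumes aI: "a \<in> Idx p k" and bI: "b \<in> Idx p k"
  shows "sigma chi Phihat p k d a b = (1 / of_nat (p * CARD('a)) ^ k) *
     (if fst a = fst b then chi (Wf Phihat k a) d * cnj (chi (Wf Phihat k b) d) else 0)"
  unfolding sigma_form phi_eval[OF aI] phi_eval[OF bI]
  by (simp only: sum_collapse[OF fin_Xs Idx_fst[OF aI]])

lemma Eop_form:
  fixes Phihat :: "nat \<Rightarrow> 'a::{finite,ab_group_add} \<Rightarrow> 'a" and chi :: "'a \<Rightarrow> 'a \<Rightarrow> complex"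
  shows "Eop chi Phihat p k j a b = complex_of_real (1 / real CARD('a)) *
     (\<Sum>x\<in>Xs k. (\<Sum>w\<in>UNIV. chi w j * ketS Phihat p k x w a) * cnj (\<Sum>w\<in>UNIV. chi w j * ketS Phihat p k x w b))"
  unfolding Eop_def outer_def cnj_sum sum_product
  by (simp add: mult_ac)

lemma Eop_closed:
  fixes Phihat :: "nat \<Rightarrow> 'a::{finite,ab_group_add} \<Rightarrow> 'a" and chi :: "'a \<Rightarrow> 'a \<Rightarrow> complex"
  assumes aI: "a \<in> Idx p k" and bI: "b \<in> Idx p k"
  shows "Eop chi Phihat p k j a b = complex_of_real (1 / real CARD('a)) *
     (if fst a = fst b then (chi (Wf Phihat k a) j * complex_of_real (1 / sqrt (real (hcard Phihat p k a))))
        * cnj (chi (Wf Phihat k b) j * complex_of_real (1 / sqrt (real (hcard Phihat p k b)))) else 0)"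
  unfolding Eop_form psi_eval[OF aI] psi_eval[OF bI]
  by (simp only: sum_collapse[OF fin_Xs Idx_fst[OF aI]])

lemma class_avg_zero:
  fixes I :: "'i set" and S G :: "'i \<Rightarrow> 'i \<Rightarrow> complex" and cl :: "'i \<Rightarrow> 'c" and f :: "'i \<Rightarrow> complex"
  assumes fin: "finite I" and SG: "\<And>a. a \<in> I \<Longrightarrow> mmul I S G a b = 0"
    and Sform: "\<And>a b. a \<in> I \<Longrightarrow> b \<in> I \<Longrightarrow> S a b = \<kappa> * (if cl a = cl b then 1 else 0)"
    and kap: "\<kappa> \<noteq> 0"
    and fc: "\<And>a l. a \<in> I \<Longrightarrow> l \<in> I \<Longrightarrow> cl l = cl a \<Longrightarrow> f l = f a"
  shows "(\<Sum>a\<in>I. f a * G a b) = 0"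
proof -
  define h where "h a = (of_nat (card {l\<in>I. cl l = cl a}) :: complex)" for a
  have hnz: "h a \<noteq> 0" if "a \<in> I" for a
    unfolding h_def using class_card_pos[OF fin that, of cl] by simp
  have z: "(\<Sum>l\<in>I. if cl l = cl a then G l b else 0) = 0" if aI: "a \<in> I" for a
  proof -
    have "mmul I S G a b = \<kappa> * (\<Sum>l\<in>I. if cl l = cl a then G l b else 0)"
      unfolding mmul_def sum_distrib_left by (intro sum.cong refl) (auto simp: Sform aI)
    thus ?thesis using SG[OF aI] kap by simp
  qed
  have "0 = (\<Sum>a\<in>I. f a / h a * (\<Sum>l\<in>I. if cl l = cl a then G l b else 0))"
    using z by simp
  also have "\<dots> = (\<Sum>a\<in>I. \<Sum>l\<in>I. if cl a = cl l then G l b * (f a / h a) else 0)"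
    unfolding sum_distrib_left by (intro sum.cong refl) auto
  also have "\<dots> = (\<Sum>l\<in>I. \<Sum>a\<in>I. if cl a = cl l then G l b * (f a / h a) else 0)"
    by (rule sum.swap)
  also have "\<dots> = (\<Sum>l\<in>I. G l b * (\<Sum>a\<in>I. if cl a = cl l then f a / h a else 0))"
    unfolding sum_distrib_left by (intro sum.cong refl) auto
  also have "\<dots> = (\<Sum>l\<in>I. G l b * (of_nat (card {a\<in>I. cl a = cl l}) * (f l / h l)))"
  proof (intro sum.cong refl arg_cong[where f="\<lambda>z. G _ b * z"])
    fix l assume lI: "l \<in> I"
    show "(\<Sum>a\<in>I. if cl a = cl l then f a / h a else 0) = of_nat (card {a\<in>I. cl a = cl l}) * (f l / h l)"
    proof (rule class_sum[OF fin lI])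
      fix a assume aI: "a \<in> I" and al: "cl a = cl l"
      have "h a = h l" unfolding h_def using al by simp
      thus "f a / h a = f l / h l" using fc[OF lI aI al] by simp
    qed
  qed
  also have "\<dots> = (\<Sum>l\<in>I. f l * G l b)"
    by (intro sum.cong refl) (use hnz in \<open>simp add: h_def\<close>)
  finally show ?thesis by simp
qed



theorem mainTheorem7:
  fixes chi :: "'a::{finite,ab_group_add} \<Rightarrow> 'a \<Rightarrow> complex"
    and phi :: "'a \<Rightarrow> 'a"
    and Phihat :: "nat \<Rightarrow> 'a \<Rightarrow> 'a"
    and p k :: nat
    and Q :: "((nat \<Rightarrow> 'a) \<times> (nat \<Rightarrow> nat)) \<Rightarrow> ((nat \<Rightarrow> 'a) \<times> (nat \<Rightarrow> nat)) \<Rightarrow> complex"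
    and G :: "'a \<Rightarrow> ((nat \<Rightarrow> 'a) \<times> (nat \<Rightarrow> nat)) \<Rightarrow> ((nat \<Rightarrow> 'a) \<times> (nat \<Rightarrow> nat)) \<Rightarrow> complex"
  assumes p_prime: "prime p"
    and chars: "bij_betw chi UNIV {f. character f}"
    and chi_mult: "\<And>x x' y. chi x y * chi x' y = chi (x + x') y"
    and chi_sym: "\<And>x y. chi x y = chi y x"
    and phi_bij: "bij phi"
    and phi_hom: "\<And>a b. phi (a + b) = phi a + phi b"
    and phi_order: "phi ^^ p = id"
    and Phihat_def: "\<And>b x d. b < p \<Longrightarrow> chi x (Phi phi b d) = chi (Phihat b x) d"
    and k_pos: "k \<ge> 1"
    and Q_proj: "proj_onto_kernel (Idx p k) (\<lambda>a b. \<Sum>d\<in>UNIV. sigma chi Phihat p k d a b) Q"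
    and G_psd: "\<And>j. psd (Idx p k) (G j)"
    and G_supp: "\<And>j a b. a \<in> Idx p k \<Longrightarrow> b \<in> Idx p k \<Longrightarrow>
        mmul (Idx p k) (\<lambda>a b. \<Sum>d\<in>UNIV. sigma chi Phihat p k d a b) (G j) a b = 0"
    and G_sum: "\<And>a b. a \<in> Idx p k \<Longrightarrow> b \<in> Idx p k \<Longrightarrow> (\<Sum>j\<in>UNIV. G j a b) = Q a b"
  shows "povm (Idx p k) UNIV (\<lambda>j a b. Eop chi Phihat p k j a b + G j a b)
       \<and> (\<forall>F. povm (Idx p k) UNIV F \<longrightarrow>
              avg_success chi Phihat p k F
                \<le> avg_success chi Phihat p k (\<lambda>j a b. Eop chi Phihat p k j a b + G j a b))"
  proof -
  let ?I = "Idx p k :: ((nat \<Rightarrow> 'a) \<times> (nat \<Rightarrow> nat)) set"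
  define n where "n = CARD('a)"
  define Nc :: complex where "Nc = of_nat (p * CARD('a)) ^ k"
  define cl where "cl = clf Phihat k"
  define W where "W = Wf Phihat k"
  define hh where "hh = hcard Phihat p k"
  define Sg where "Sg = (\<lambda>a b. \<Sum>d\<in>UNIV. sigma chi Phihat p k d a b)"
  define E where "E = Eop chi Phihat p k"
  define E' where "E' = (\<lambda>j a b. Eop chi Phihat p k j a b + G j a b)"
  have fin: "finite ?I" by (rule fin_Idx)
  have ppos: "p > 0" using p_prime prime_gt_0_nat by blast
  have npos: "n > 0" unfolding n_def by simp
  have Ncnz: "Nc \<noteq> 0" unfolding Nc_def using ppos by simp
  have kapnz: "of_nat n / Nc \<noteq> 0" using Ncnz npos by simp
  have cl_iff: "cl a = cl b \<longleftrightarrow> fst a = fst b \<and> W a = W b" for a b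
    unfolding cl_def W_def clf_def by auto
  have hh_card: "hh a = card {l \<in> ?I. cl l = cl a}" for a
    unfolding hh_def hcard_def cl_def ..
  have hhpos: "hh a > 0" if "a \<in> ?I" for a unfolding hh_def by (rule hcard_pos[OF that])
  have orth: "(\<Sum>d\<in>UNIV. chi w d * cnj (chi v d)) = (if w = v then of_nat n else 0)" for w v
    unfolding n_def by (rule chi_orth[OF chars chi_mult chi_sym])
  have unit: "cnj (chi w d) * chi w d = 1" for w d by (rule chi_cnj_unit[OF chars])
  have Sg_form: "Sg a b = (of_nat n / Nc) * (if cl a = cl b then 1 else 0)" if aI: "a \<in> ?I" and bI: "b \<in> ?I" for a b
  proof -
    have "Sg a b = (1 / Nc) * (if fst a = fst b then (\<Sum>d\<in>UNIV. chi (W a) d * cnj (chi (W b) d)) else 0)"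
      unfolding Sg_def sigma_closed[OF aI bI] Nc_def W_def by (simp add: sum_distrib_left sum_divide_distrib)
    thus ?thesis unfolding orth cl_iff by auto
  qed
  have Q_form: "Q a b = (if a = b then 1 else 0) - (if cl a = cl b then 1 / of_nat (hh b) else 0)"
    if aI: "a \<in> ?I" and bI: "b \<in> ?I" for a b
  proof -
    have herm: "hermitian ?I Q" and idem: "\<forall>a\<in>?I. \<forall>b\<in>?I. mmul ?I Q Q a b = Q a b"
      and ker: "\<forall>v. (\<forall>a\<in>?I. mvec ?I Sg v a = 0) \<longleftrightarrow> (\<forall>a\<in>?I. mvec ?I Q v a = v a)"
      using Q_proj unfolding proj_onto_kernel_def Sg_def by auto
    show ?thesis unfolding hh_card
      by (rule Q_char[OF fin herm idem ker Sg_form kapnz aI bI])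
  qed
  have E_closed: "E j a b = complex_of_real (1 / real n) *
     (if fst a = fst b then (chi (W a) j * complex_of_real (1 / sqrt (real (hh a))))
        * cnj (chi (W b) j * complex_of_real (1 / sqrt (real (hh b)))) else 0)"
    if aI: "a \<in> ?I" and bI: "b \<in> ?I" for a b j
    unfolding E_def Eop_closed[OF aI bI] n_def W_def hh_def ..
  have Esum: "(\<Sum>j\<in>UNIV. E j a b) = (if cl a = cl b then 1 / of_nat (hh a) else 0)"
    if aI: "a \<in> ?I" and bI: "b \<in> ?I" for a b
  proof -
    let ?ra = "complex_of_real (1 / sqrt (real (hh a)))" and ?rb = "complex_of_real (1 / sqrt (real (hh b)))"
    have "(\<Sum>j\<in>UNIV. E j a b) = complex_of_real (1 / real n) *
       (if fst a = fst b then (\<Sum>j\<in>UNIV. chi (W a) j * cnj (chi (W b) j)) * (?ra * cnj ?rb) else 0)"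
      unfolding E_closed[OF aI bI] by (simp add: sum_distrib_left sum_distrib_right sum_divide_distrib mult_ac)
    also have "\<dots> = (if cl a = cl b then 1 / of_nat (hh a) else 0)"
    proof (cases "cl a = cl b")
      case True
      hence "hh b = hh a" unfolding hh_def cl_def using hcard_cl[of Phihat k b a p] by simp
      moreover have "real (hh a) > 0" using hhpos[OF aI] by simp
      ultimately have "?ra * cnj ?rb = 1 / of_nat (hh a)"
        by (simp flip: of_real_mult)
      thus ?thesis using True npos unfolding orth cl_iff by simp
    next
      case False
      thus ?thesis unfolding orth cl_iff by auto
    qed
    finally show ?thesis .
  qed
  have psdE: "psd ?I (E j)" for j
    unfolding E_def
  proof (rule psd_gram[OF fin fin_Xs, where r="1 / real CARD('a)" and u="\<lambda>x a. \<Sum>w\<in>UNIV. chi w j * ketS Phihat p k x w a"])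
    show "0 \<le> 1 / real CARD('a)" by simp
    fix a b
    show "Eop chi Phihat p k j a b = complex_of_real (1 / real CARD('a)) *
       (\<Sum>x\<in>Xs k. (\<Sum>w\<in>UNIV. chi w j * ketS Phihat p k x w a) * cnj (\<Sum>w\<in>UNIV. chi w j * ketS Phihat p k x w b))"
      by (rule Eop_form)
  qed
  have povmE': "povm ?I UNIV E'"
    unfolding povm_def
  proof (intro conjI ballI)
    fix j show "psd ?I (E' j)" unfolding E'_def using psd_add[OF psdE[unfolded E_def] G_psd] by simp
  next
    fix a b assume aI: "a \<in> ?I" and bI: "b \<in> ?I"
    have "(\<Sum>j\<in>UNIV. E' j a b) = (\<Sum>j\<in>UNIV. E j a b) + (\<Sum>j\<in>UNIV. G j a b)"
      unfolding E'_def E_def by (simp add: sum.distrib)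
    also have "\<dots> = (if a = b then 1 else 0)"
      unfolding Esum[OF aI bI] G_sum[OF aI bI] Q_form[OF aI bI]
      using hcard_cl[of Phihat k a b p] unfolding hh_def cl_def by auto
    finally show "(\<Sum>j\<in>UNIV. E' j a b) = (if a = b then 1 else 0)" .
  qed
  define g where "g x j a = (if fst a = x then chi (W a) j else 0)" for x j a
  define Nr where "Nr = real (p * CARD('a)) ^ k"
  have NcNr: "Nc = complex_of_real Nr" unfolding Nc_def Nr_def by simp
  have Nrpos: "Nr > 0" unfolding Nr_def using ppos by simp
  have trace: "mtrace ?I (mmul ?I (F j) (sigma chi Phihat p k j)) = (1 / Nc) * (\<Sum>x\<in>Xs k. quadf ?I (F j) (g x j))"
    for F j
  proof -
    have "mtrace ?I (mmul ?I (F j) (sigma chi Phihat p k j))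
        = (\<Sum>a\<in>?I. \<Sum>b\<in>?I. (1 / Nc) * (if fst a = fst b then cnj (chi (W a) j) * F j a b * chi (W b) j else 0))"
      unfolding mtrace_def mmul_def
    proof (intro sum.cong refl)
      fix a b assume aI: "a \<in> ?I" and bI: "b \<in> ?I"
      show "F j a b * sigma chi Phihat p k j b a = (1 / Nc) * (if fst a = fst b then cnj (chi (W a) j) * F j a b * chi (W b) j else 0)"
        unfolding sigma_closed[OF bI aI] Nc_def W_def by auto
    qed
    also have "\<dots> = (1 / Nc) * (\<Sum>a\<in>?I. \<Sum>b\<in>?I. \<Sum>x\<in>Xs k. cnj (g x j a) * F j a b * g x j b)"
    proof -
      have "(\<Sum>x\<in>Xs k. cnj (g x j a) * F j a b * g x j b) = (if fst a = fst b then cnj (chi (W a) j) * F j a b * chi (W b) j else 0)"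
        if aI: "a \<in> ?I" for a b
      proof -
        have "(\<Sum>x\<in>Xs k. cnj (g x j a) * F j a b * g x j b)
            = (\<Sum>x\<in>Xs k. if x = fst a then (if fst a = fst b then cnj (chi (W a) j) * F j a b * chi (W b) j else 0) else 0)"
          unfolding g_def by (intro sum.cong refl) auto
        also have "\<dots> = (if fst a = fst b then cnj (chi (W a) j) * F j a b * chi (W b) j else 0)"
          by (simp only: sum.delta[OF fin_Xs] Idx_fst[OF aI] if_True)
        finally show ?thesis .
      qed
      thus ?thesis by (simp add: sum_distrib_left)
    qed
    also have "\<dots> = (1 / Nc) * (\<Sum>x\<in>Xs k. quadf ?I (F j) (g x j))"
    proof -
      have "(\<Sum>a\<in>?I. \<Sum>b\<in>?I. \<Sum>x\<in>Xs k. cnj (g x j a) * F j a b * g x j b)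
          = (\<Sum>a\<in>?I. \<Sum>x\<in>Xs k. \<Sum>b\<in>?I. cnj (g x j a) * F j a b * g x j b)"
        by (rule sum.cong[OF refl], rule sum.swap)
      also have "\<dots> = (\<Sum>x\<in>Xs k. \<Sum>a\<in>?I. \<Sum>b\<in>?I. cnj (g x j a) * F j a b * g x j b)"
        by (rule sum.swap)
      finally show ?thesis unfolding quadf_def by simp
    qed
    finally show ?thesis .
  qed
  have avg_eq: "avg_success chi Phihat p k F = (1 / (real n * Nr)) * (\<Sum>x\<in>Xs k. \<Sum>j\<in>UNIV. Re (quadf ?I (F j) (g x j)))"
    for F
  proof -
    have "avg_success chi Phihat p k F = Re (complex_of_real (1 / (real n * Nr)) * (\<Sum>x\<in>Xs k. \<Sum>j\<in>UNIV. quadf ?I (F j) (g x j)))"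
      unfolding avg_success_def trace n_def NcNr
      by (simp add: sum_distrib_left sum.swap[of _ "Xs k"] mult_ac)
    also have "\<dots> = (1 / (real n * Nr)) * (\<Sum>x\<in>Xs k. \<Sum>j\<in>UNIV. Re (quadf ?I (F j) (g x j)))"
      by (simp add: Re_sum)
    finally show ?thesis .
  qed
  define sx where "sx x = (\<Sum>a\<in>{a\<in>?I. fst a = x}. 1 / sqrt (real (hh a)))" for x
  have sx_nonneg: "sx x \<ge> 0" for x unfolding sx_def by (rule sum_nonneg) simp
  have sx_alt: "(\<Sum>a\<in>?I. if fst a = x then complex_of_real (1 / sqrt (real (hh a))) else 0) = complex_of_real (sx x)" for x
    unfolding sx_def using fin by (simp add: sum.inter_filter) (intro sum.cong refl, simp)
  have boundF: "(\<Sum>j\<in>UNIV. Re (quadf ?I (F j) (g x j))) \<le> (sx x)\<^sup>2" if pF: "povm ?I UNIV F" for F x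
  proof -
    define Z where "Z j = (\<Sum>a\<in>?I. \<Sum>b\<in>?I. if fst a = x \<and> cl a = cl b
                 then F j a b / of_real (sqrt (real (card {l\<in>?I. cl l = cl a}))) else 0)" for j
    have one: "Re (quadf ?I (F j) (g x j)) \<le> sx x * Re (Z j)" for j
    proof -
      have psdF: "psd ?I (F j)" using pF unfolding povm_def by blast
      have "Re (quadf ?I (F j) (\<lambda>a. if fst a = x then chi (W a) j else 0))
          \<le> (\<Sum>a\<in>{a\<in>?I. fst a = x}. 1 / sqrt (real (card {l\<in>?I. cl l = cl a}))) * Re (Z j)"
        unfolding Z_def
        by (rule main_ineq[OF fin psdF]) (auto simp: cl_iff unit)
      thus ?thesis unfolding g_def sx_def hh_card .
    qed
    have "(\<Sum>j\<in>UNIV. Re (quadf ?I (F j) (g x j))) \<le> (\<Sum>j\<in>UNIV. sx x * Re (Z j))"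
      by (rule sum_mono) (rule one)
    also have "\<dots> = sx x * Re (\<Sum>j\<in>UNIV. Z j)" by (simp add: sum_distrib_left Re_sum)
    also have "(\<Sum>j\<in>UNIV. Z j) = complex_of_real (sx x)"
    proof -
      define K where "K a b = (if fst a = x \<and> cl a = cl b then 1 / complex_of_real (sqrt (real (hh a))) else 0)" for a b
      have "(\<Sum>j\<in>UNIV. Z j) = (\<Sum>j\<in>UNIV. \<Sum>a\<in>?I. \<Sum>b\<in>?I. F j a b * K a b)"
        unfolding Z_def K_def hh_card by (intro sum.cong refl) auto
      also have "\<dots> = (\<Sum>a\<in>?I. \<Sum>j\<in>UNIV. \<Sum>b\<in>?I. F j a b * K a b)" by (rule sum.swap)
      also have "\<dots> = (\<Sum>a\<in>?I. \<Sum>b\<in>?I. \<Sum>j\<in>UNIV. F j a b * K a b)"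
        by (rule sum.cong[OF refl], rule sum.swap)
      also have "\<dots> = (\<Sum>a\<in>?I. \<Sum>b\<in>?I. (if a = b then 1 else 0) * K a b)"
        using pF unfolding povm_def by (simp add: sum_distrib_right[symmetric])
      also have "\<dots> = (\<Sum>a\<in>?I. K a a)"
        using fin by (simp add: if_distrib[of "\<lambda>z. z * _"] cong: if_cong)
      also have "\<dots> = (\<Sum>a\<in>?I. if fst a = x then complex_of_real (1 / sqrt (real (hh a))) else 0)"
        unfolding K_def by (intro sum.cong refl) simp
      finally show ?thesis unfolding sx_alt .
    qed
    finally show ?thesis by (simp add: power2_eq_square)
  qed
  have eqE: "(\<Sum>j\<in>UNIV. Re (quadf ?I (E' j) (g x j))) = (sx x)\<^sup>2" for x
  proof -
    have gcl: "g x j l = g x j a" if "cl l = cl a" for l a j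
      using that unfolding g_def cl_iff by auto
    have qG: "quadf ?I (G j) (g x j) = 0" for j
    proof -
      have inner: "(\<Sum>a\<in>?I. cnj (g x j a) * G j a b) = 0" if bI: "b \<in> ?I" for b
      proof (rule class_avg_zero[OF fin, where S=Sg and cl=cl and \<kappa>="of_nat n / Nc"])
        show "\<And>a. a \<in> ?I \<Longrightarrow> mmul ?I Sg (G j) a b = 0" unfolding Sg_def using G_supp bI by blast
        show "\<And>a b. a \<in> ?I \<Longrightarrow> b \<in> ?I \<Longrightarrow> Sg a b = of_nat n / Nc * (if cl a = cl b then 1 else 0)"
          by (rule Sg_form)
        show "of_nat n / Nc \<noteq> 0" by (rule kapnz)
        show "cnj (g x j l) = cnj (g x j a)" if "a \<in> ?I" "l \<in> ?I" "cl l = cl a" for a l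
          using gcl[OF that(3), of j] by (rule arg_cong)
      qed
      have "quadf ?I (G j) (g x j) = (\<Sum>b\<in>?I. (\<Sum>a\<in>?I. cnj (g x j a) * G j a b) * g x j b)"
        unfolding quadf_def sum_distrib_right by (rule sum.swap)
      also have "\<dots> = 0" using inner by simp
      finally show ?thesis .
    qed
    have qE: "quadf ?I (E j) (g x j) = complex_of_real ((sx x)\<^sup>2 / real n)" for j
    proof -
      let ?r = "\<lambda>a. if fst a = x then complex_of_real (1 / sqrt (real (hh a))) else 0"
      have "quadf ?I (E j) (g x j) = (\<Sum>a\<in>?I. \<Sum>b\<in>?I. complex_of_real (1 / real n) * (?r a * ?r b))"
        unfolding quadf_def
      proof (intro sum.cong refl)
        fix a b assume aI: "a \<in> ?I" and bI: "b \<in> ?I"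
        show "cnj (g x j a) * E j a b * g x j b = complex_of_real (1 / real n) * (?r a * ?r b)"
        proof -
          have ua: "cnj (chi (W a) j) * chi (W a) j = 1" by (rule unit)
          have ub: "cnj (chi (W b) j) * chi (W b) j = 1" by (rule unit)
          have cb: "chi (W b) j * cnj (chi (W b) j) = 1" using ub by (simp add: mult.commute)
          show ?thesis
          proof (cases "fst a = x \<and> fst b = x")
            case True
            have "cnj (chi (W a) j) * (complex_of_real (1 / real n) *
                 (chi (W a) j * complex_of_real (1 / sqrt (real (hh a))) *
                  cnj (chi (W b) j * complex_of_real (1 / sqrt (real (hh b)))))) * chi (W b) j
              = complex_of_real (1 / real n) * (cnj (chi (W a) j) * chi (W a) j) * (chi (W b) j * cnj (chi (W b) j))
                * (complex_of_real (1 / sqrt (real (hh a))) * complex_of_real (1 / sqrt (real (hh b))))"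
              by (simp only: complex_cnj_mult complex_cnj_complex_of_real mult_ac)
            also have "\<dots> = complex_of_real (1 / real n) * (complex_of_real (1 / sqrt (real (hh a))) * complex_of_real (1 / sqrt (real (hh b))))"
              by (simp only: ua cb mult_1_right)
            finally show ?thesis unfolding E_closed[OF aI bI] g_def using True by simp
          next
            case False
            thus ?thesis unfolding E_closed[OF aI bI] g_def by auto
          qed
        qed
      qed
      also have "\<dots> = complex_of_real (1 / real n) * ((\<Sum>a\<in>?I. ?r a) * (\<Sum>b\<in>?I. ?r b))"
        unfolding sum_product by (simp only: sum_distrib_left)
      also have "\<dots> = complex_of_real ((sx x)\<^sup>2 / real n)"
        unfolding sx_alt by (simp add: power2_eq_square)
      finally show ?thesis .
    qed
    have "(\<Sum>j\<in>UNIV. Re (quadf ?I (E' j) (g x j))) = (\<Sum>j\<in>(UNIV::'a set). (sx x)\<^sup>2 / real n)"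
    proof (rule sum.cong[OF refl])
      fix j
      have "quadf ?I (E' j) (g x j) = quadf ?I (E j) (g x j) + quadf ?I (G j) (g x j)"
        unfolding quadf_def E'_def E_def by (simp add: distrib_left distrib_right sum.distrib)
      thus "Re (quadf ?I (E' j) (g x j)) = (sx x)\<^sup>2 / real n" using qE qG by simp
    qed
    also have "\<dots> = (sx x)\<^sup>2" using npos unfolding n_def by simp
    finally show ?thesis .
  qed
  show ?thesis
  proof (intro conjI allI impI)
    show "povm ?I UNIV (\<lambda>j a b. Eop chi Phihat p k j a b + G j a b)" using povmE' unfolding E'_def .
  next
    fix F :: "'a \<Rightarrow> _ \<Rightarrow> _ \<Rightarrow> complex" assume pF: "povm ?I UNIV F"
    have "avg_success chi Phihat p k F = (1 / (real n * Nr)) * (\<Sum>x\<in>Xs k. \<Sum>j\<in>UNIV. Re (quadf ?I (F j) (g x j)))"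
      by (rule avg_eq)
    also have "\<dots> \<le> (1 / (real n * Nr)) * (\<Sum>x\<in>Xs k. (sx x)\<^sup>2)"
      by (intro mult_left_mono sum_mono boundF[OF pF]) (use npos Nrpos in simp)
    also have "\<dots> = (1 / (real n * Nr)) * (\<Sum>x\<in>Xs k. \<Sum>j\<in>UNIV. Re (quadf ?I (E' j) (g x j)))"
      by (simp add: eqE)
    also have "\<dots> = avg_success chi Phihat p k E'"
      by (rule avg_eq[symmetric])
    finally show "avg_success chi Phihat p k F \<le> avg_success chi Phihat p k (\<lambda>j a b. Eop chi Phihat p k j a b + G j a b)"
      unfolding E'_def .
  qed
qed



end
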